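(* Let $(Q,\cdot)$ be a Ward quasigroup with $xx=e$ for all $x\in Q$. Define $x\star y=(e\cdot x)\cdot y$. Then $(Q,\star)$ is a quasigroup satisfying $((e\star e)\star(x\star z))\star((e\star y)\star z)=x\star y$ for all $x,y,z\in Q$, i.e. $(Q,\star,e)$ is a double Ward quasigroup.
   Context: A quasigroup is a magma in which $ax=b$ and $ya=b$ have unique solutions for all $a,b$. A Ward quasigroup is a quasigroup satisfying $(xz)(yz)=xy$ for all $x,y,z$; in it there is $e$ with $xx=e$ for all $x$. A double Ward quasigroup $(Q,\cdot,e)$ is a quasigroup with an element $e$ such that $(ee\cdot xz)(ey\cdot z)=xy$ for all $x,y,z$. *)

theory Defs
  imports Main
begin

definition quasigroup :: "('a \<Rightarrow> 'a \<Rightarrow> 'a) \<Rightarrow> bool" where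
  "quasigroup m \<longleftrightarrow> (\<forall>a b. \<exists>!x. m a x = b) \<and> (\<forall>a b. \<exists>!y. m y a = b)"

definition ward_quasigroup :: "('a \<Rightarrow> 'a \<Rightarrow> 'a) \<Rightarrow> bool" where
  "ward_quasigroup m \<longleftrightarrow> quasigroup m \<and> (\<forall>x y z. m (m x z) (m y z) = m x y)"

definition double_ward_quasigroup :: "('a \<Rightarrow> 'a \<Rightarrow> 'a) \<Rightarrow> 'a \<Rightarrow> bool" where
  "double_ward_quasigroup m e \<longleftrightarrow> quasigroup m \<and>
     (\<forall>x y z. m (m (m e e) (m x z)) (m (m e y) z) = m x y)"

end

theory Submission
  imports Defs
begin

theorem proposition4p2:
  fixes mult :: "'a \<Rightarrow> 'a \<Rightarrow> 'a" and e :: 'a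
  assumes "ward_quasigroup mult"
    and "\<forall>x. mult x x = e"
  shows "double_ward_quasigroup (\<lambda>x y. mult (mult e x) y) e"
proof -
  have q: "quasigroup mult" and W: "\<And>x y z. mult (mult x z) (mult y z) = mult x y"
    using assms(1) unfolding ward_quasigroup_def by auto
  have E: "\<And>x. mult x x = e" using assms(2) by auto
  have L1: "mult u e = u" for u
  proof -
    obtain x where "mult u x = u" using q unfolding quasigroup_def by metis
    then show ?thesis using W[of u x x] E[of x] by simp
  qed
  have L2: "mult e (mult e x) = x" for x
    using W[of x x e] E[of x] L1[of x] by simp
  have L3: "mult e (mult a b) = mult b a" for a b
    using W[of b b a] E[of b] by simp
  show ?thesis unfolding double_ward_quasigroup_def
  proof (intro conjI allI)
    show "quasigroup (\<lambda>x y. mult (mult e x) y)"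
      unfolding quasigroup_def
    proof (intro conjI allI)
      fix a b
      show "\<exists>!x. mult (mult e a) x = b" using q unfolding quasigroup_def by blast
    next
      fix a b
      obtain w where w: "mult w a = b" "\<And>w'. mult w' a = b \<Longrightarrow> w' = w"
        using q unfolding quasigroup_def by metis
      show "\<exists>!y. mult (mult e y) a = b"
      proof
        show "mult (mult e (mult e w)) a = b" using L2 w(1) by simp
      next
        fix y assume "mult (mult e y) a = b"
        then have "mult e y = w" using w by blast
        then show "y = mult e w" using L2 by metis
      qed
    qed
  next
    fix x y z
    have ee: "mult e e = e" using E by simp
    show "mult (mult e (mult (mult e (mult (mult e e) e)) (mult (mult e x) z)))
            (mult (mult e (mult (mult e e) y)) z) = mult (mult e x) y"
      unfolding ee L1 L2 L3 using W[of "mult e x" z y] by simp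
  qed
qed

end
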